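(* Take $\Omega=(0,\infty)$. For any $\delta\in(0,1]$ and any interval $(\alpha,\beta]$ with $0\le\alpha<\beta\le1$, there exist a non-negative integer $m$ and intervals $I,J_1,\dots,J_m$ such that $$(\alpha,\beta]\preceq I\cup J_1\cup\dots\cup J_m,$$ $I\subseteq(0,\delta/2]$, $J_i\subseteq(\delta/2,1]$ for each $1\le i\le m$, and the lengths satisfy $$|I|+\sum_{i=1}^m|J_i|=\beta-\alpha,\qquad |I|>\frac{\delta}{4}(\beta-\alpha).$$
   Context: Let $\Omega$ be either $(0,\infty)$ or $D=\mathbb{C}\setminus\{0,-1,-2,\dots\}$. An admissible instance (relative to $\Omega$) is one of the following finite lists of points, all entries of which are required to lie in $\Omega$: (i) $(z+1,\,z)$ for $z\in\Omega$ with $z+1\in\Omega$ (corresponding to the identity $\Gamma(z+1)=z\Gamma(z)$); (ii) $(z,\,1-z)$ for $z\in\Omega\setminus\mathbb{Z}$ with $1-z\in\Omega$ (corresponding to $\Gamma(z)\Gamma(1-z)=\pi/\sin(\pi z)$); (iii) for an integer $n\ge 2$, $\big(z,\,\tfrac{z}{n},\,\tfrac{z+1}{n},\dots,\tfrac{z+n-1}{n}\big)$ (corresponding to Gauss's multiplication formula $(2\pi)^{(n-1)/2}n^{1/2-z}\Gamma(z)=\prod_{j=0}^{n-1}\Gamma(\tfrac{z+j}{n})$). For $B\subseteq\Omega$, a point $p\in\Omega$ is obtained from $B$ in one step if there is an admissible instance in which $p$ occurs exactly once as an entry and every other entry lies in $B$. Set $B_0=B$, $B_{i+1}=B_i\cup\{p: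 p \text{ obtained from } B_i \text{ in one step}\}$, and $\mathrm{Cl}_\Omega(B)=\bigcup_{i\ge0}B_i$ (the set of points at which the value of $\Gamma$ is determined by its values on $B$ via finitely many applications of the identities). For $A,B\subseteq\Omega$ write $A\preceq B$ if $A\subseteq \mathrm{Cl}_\Omega(B)$. A set $S\subseteq\Omega$ is a fundamental set (for $\Gamma$ on $\Omega$) if $\mathrm{Cl}_\Omega(S)=\Omega$. $|I|$ denotes the length of an interval $I$. *)

theory Defs
  imports "HOL-Analysis.Analysis"
begin

definition Omega :: "real set" where
  "Omega = {0<..}"

definition admissible :: "real list set" where
  "admissible =
     {l. set l \<subseteq> Omega \<and>
        ((\<exists>z. l = [z + 1, z]) \<or>
         (\<exists>z. z \<notin> \<int> \<and> l = [z, 1 - z]) \<or>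
         (\<exists>z (n::nat). n \<ge> 2 \<and> l = z # map (\<lambda>j. (z + real j) / real n) [0..<n]))}"

definition one_step :: "real set \<Rightarrow> real set" where
  "one_step B = {p. p \<in> Omega \<and> (\<exists>l\<in>admissible. count_list l p = 1 \<and>
                     (\<forall>q\<in>set l. q \<noteq> p \<longrightarrow> q \<in> B))}"

definition step_cl :: "real set \<Rightarrow> real set" where
  "step_cl B = B \<union> one_step B"

definition Cl :: "real set \<Rightarrow> real set" where
  "Cl B = (\<Union>i. (step_cl ^^ i) B)"

definition preceq :: "real set \<Rightarrow> real set \<Rightarrow> bool" where
  "preceq A B \<longleftrightarrow> A \<subseteq> Cl B"

definition ilen :: "real set \<Rightarrow> real" where
  "ilen I = (if I = {} then 0 else Sup I - Inf I)"

end

theory Submission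
  imports Defs
begin

lemma ilen_ioc: "(a::real) < b \<Longrightarrow> ilen {a<..b} = b - a"
  unfolding ilen_def by auto

lemma B_sub_iter: "B \<subseteq> (step_cl ^^ n) B"
  by (induction n) (auto simp: step_cl_def)

lemma iter_sub_Cl: "(step_cl ^^ n) B \<subseteq> Cl B"
  unfolding Cl_def by blast

lemma dup_step:
  assumes "0 < x" "x \<noteq> 1" "x/2 \<in> C" "(x+1)/2 \<in> C"
  shows "x \<in> step_cl C"
proof -
  let ?l = "[x, x/2, (x+1)/2]"
  have eq: "?l = x # map (\<lambda>j. (x + real j) / real (2::nat)) [0..<2]"
    by (simp add: upt_rec)
  have "set ?l \<subseteq> Omega" using assms(1) by (auto simp: Omega_def)
  moreover have "\<exists>z (n::nat). n \<ge> 2 \<and> ?l = z # map (\<lambda>j. (z + real j) / real n) [0..<n]"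
    by (rule exI[of _ x], rule exI[of _ "2::nat"]) (simp add: upt_rec)
  ultimately have adm: "?l \<in> admissible" unfolding admissible_def by blast
  have ne1: "x/2 \<noteq> x" using assms(1) by auto
  have ne2: "(x+1)/2 \<noteq> x" using assms(2) by auto
  have "count_list ?l x = 1" using ne1 ne2 by simp
  moreover have "\<forall>q\<in>set ?l. q \<noteq> x \<longrightarrow> q \<in> C" using assms by auto
  moreover have "x \<in> Omega" using assms(1) by (simp add: Omega_def)
  ultimately have "x \<in> one_step C" unfolding one_step_def using adm by blast
  thus ?thesis unfolding step_cl_def by blast
qed

lemma geo_sum: "(\<Sum>i=1..k. (d::real) / 2^i) = d - d / 2^k"
proof (induction k)
  case 0 then show ?case by simp
next
  case (Suc k)
  then show ?case by (simp add: field_simps)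
qed

theorem mainTheorem7:
  fixes \<delta> \<alpha> \<beta> :: real
  assumes "0 < \<delta>" and "\<delta> \<le> 1"
    and "0 \<le> \<alpha>" and "\<alpha> < \<beta>" and "\<beta> \<le> 1"
  shows "\<exists>(m::nat) (I::real set) (J::nat \<Rightarrow> real set).
           is_interval I \<and> (\<forall>i\<in>{1..m}. is_interval (J i)) \<and>
           preceq {\<alpha><..\<beta>} (I \<union> (\<Union>i\<in>{1..m}. J i)) \<and>
           I \<subseteq> {0<..\<delta>/2} \<and> (\<forall>i\<in>{1..m}. J i \<subseteq> {\<delta>/2<..1}) \<and>
           ilen I + (\<Sum>i=1..m. ilen (J i)) = \<beta> - \<alpha> \<and>
           ilen I > \<delta>/4 * (\<beta> - \<alpha>)"
proof -
  have ex: "\<exists>k::nat. 2/\<delta> \<le> 2^k"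
  proof -
    obtain n where "2/\<delta> < (2::real)^n" using real_arch_pow[of 2 "2/\<delta>"] by auto
    thus ?thesis by (intro exI[of _ n]) simp
  qed
  define k where "k = (LEAST k::nat. 2/\<delta> \<le> 2^k)"
  have k1: "2/\<delta> \<le> 2^k" unfolding k_def using LeastI_ex[OF ex] .
  have two: "2 \<le> 2/\<delta>" using assms(1,2) by (simp add: field_simps)
  have "k \<noteq> 0"
  proof
    assume "k = 0" thus False using k1 two by simp
  qed
  hence kpos: "k \<ge> 1" by simp
  have "\<not> (2/\<delta> \<le> 2^(k-1))"
  proof
    assume "2/\<delta> \<le> 2^(k-1)"
    hence "k \<le> k - 1" unfolding k_def by (rule Least_le)
    thus False using kpos by simp
  qed
  hence k2: "2^(k-1) < 2/\<delta>" by simp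
  have pk: "(2::real)^k = 2 * 2^(k-1)" using kpos by (cases k) auto
  have k3: "2^k < 4/\<delta>" using k2 pk by simp
  define S where "S j = {\<alpha>/2^j <.. \<beta>/2^j}" for j :: nat
  define J where "J i = {(\<alpha>/2^(i-1)+1)/2 <.. (\<beta>/2^(i-1)+1)/2}" for i :: nat
  define I where "I = S k"
  define B where "B = I \<union> (\<Union>i\<in>{1..k}. J i)"
  have d: "0 < \<beta> - \<alpha>" using assms by simp
  have main: "\<forall>j. j + n = k \<longrightarrow> S j \<subseteq> (step_cl ^^ n) B" for n
  proof (induction n)
    case 0
    then show ?case by (auto simp: I_def B_def)
  next
    case (Suc n)
    show ?case
    proof (intro allI impI subsetI)
      fix j p assume jk: "j + Suc n = k" and p: "p \<in> S j"
      have IH: "S (Suc j) \<subseteq> (step_cl ^^ n) B" using Suc jk by simp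
      have JB: "J (Suc j) \<subseteq> (step_cl ^^ n) B"
        using B_sub_iter[of B n] jk unfolding B_def by force
      have pp: "\<alpha>/2^j < p" "p \<le> \<beta>/2^j" using p by (auto simp: S_def)
      have ppos: "0 < p" 
      proof -
        have "0 \<le> \<alpha>/2^j" using assms(3) by simp
        thus ?thesis using pp(1) by linarith
      qed
      have e: "\<alpha>/2^Suc j = (\<alpha>/2^j)/2" "\<beta>/2^Suc j = (\<beta>/2^j)/2" by simp_all
      have h1: "p/2 \<in> S (Suc j)" unfolding S_def e using pp by auto
      have h2: "(p+1)/2 \<in> J (Suc j)" unfolding J_def diff_Suc_1 greaterThanAtMost_iff using pp
        by (intro conjI divide_strict_right_mono divide_right_mono) auto
      show "p \<in> (step_cl ^^ Suc n) B"
      proof (cases "p = 1")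
        case True
        hence "p \<in> (step_cl ^^ n) B" using h2 JB by auto
        thus ?thesis by (simp add: step_cl_def)
      next
        case False
        have "p \<in> step_cl ((step_cl ^^ n) B)"
          by (rule dup_step) (use ppos False h1 h2 IH JB in auto)
        thus ?thesis by simp
      qed
    qed
  qed
  have cov: "{\<alpha><..\<beta>} \<subseteq> Cl B"
    using main[of k] iter_sub_Cl[of k B] by (auto simp: S_def)
  have lenI: "ilen I = (\<beta> - \<alpha>) / 2^k"
    unfolding I_def S_def using assms(4) by (subst ilen_ioc) (auto simp: divide_simps)
  have lenJ: "ilen (J i) = (\<beta> - \<alpha>) / 2^i" if "i \<in> {1..k}" for i
  proof -
    have "ilen (J i) = (\<beta> - \<alpha>) / 2^(i-1) / 2"
      unfolding J_def using assms(4) by (subst ilen_ioc) (auto simp: divide_simps)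
    also have "... = (\<beta> - \<alpha>) / 2^i" using that by (cases i) auto
    finally show ?thesis .
  qed
  have sumJ: "(\<Sum>i=1..k. ilen (J i)) = (\<beta> - \<alpha>) - (\<beta> - \<alpha>)/2^k"
  proof -
    have "(\<Sum>i=1..k. ilen (J i)) = (\<Sum>i=1..k. (\<beta> - \<alpha>) / 2^i)"
      by (rule sum.cong[OF refl lenJ])
    thus ?thesis using geo_sum by simp
  qed
  have Isub: "I \<subseteq> {0<..\<delta>/2}"
  proof
    fix x assume "x \<in> I"
    hence x: "\<alpha>/2^k < x" "x \<le> \<beta>/2^k" by (auto simp: I_def S_def)
    have "0 \<le> \<alpha>/2^k" using assms(3) by simp
    moreover have "\<beta>/2^k \<le> \<delta>/2"
    proof -
      have "\<beta> \<le> 2^k * \<delta>/2" using k1 assms(1,5) by (simp add: field_simps)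
      thus ?thesis by (simp add: field_simps)
    qed
    ultimately show "x \<in> {0<..\<delta>/2}" unfolding greaterThanAtMost_iff using x by (intro conjI; linarith)
  qed
  have Jsub: "\<forall>i\<in>{1..k}. J i \<subseteq> {\<delta>/2<..1}"
  proof (intro ballI subsetI)
    fix i x assume "i \<in> {1..k}" "x \<in> J i"
    hence x: "(\<alpha>/2^(i-1)+1)/2 < x" "x \<le> (\<beta>/2^(i-1)+1)/2" by (auto simp: J_def)
    have "0 \<le> \<alpha>/2^(i-1)" using assms(3) by simp
    moreover have "\<beta>/2^(i-1) \<le> 1" using assms(4,5,3)
    proof -
      have "(1::real) \<le> 2^(i-1)" by simp
      hence "\<beta> \<le> 2^(i-1)" using assms(5) by linarith
      thus ?thesis by (simp add: divide_le_eq)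
    qed
    ultimately have "1/2 \<le> (\<alpha>/2^(i-1)+1)/2" "(\<beta>/2^(i-1)+1)/2 \<le> 1" by simp_all
    thus "x \<in> {\<delta>/2<..1}" unfolding greaterThanAtMost_iff using x assms(2) by (intro conjI; linarith)
  qed
  have big: "ilen I > \<delta>/4 * (\<beta> - \<alpha>)"
  proof -
    have "\<delta> * 2^k < 4" using k3 assms(1) by (simp add: field_simps)
    hence "(\<beta> - \<alpha>) * (\<delta> * 2^k) < (\<beta> - \<alpha>) * 4" using d
      by (intro mult_strict_left_mono)
    hence "\<delta>/4 * (\<beta> - \<alpha>) * 2^k < (\<beta> - \<alpha>)" by (simp add: field_simps)
    thus ?thesis unfolding lenI by (simp add: less_divide_eq)
  qed
  have cov': "preceq {\<alpha><..\<beta>} (I \<union> (\<Union>i\<in>{1..k}. J i))"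
    using cov unfolding preceq_def B_def .
  have sumall: "ilen I + (\<Sum>i=1..k. ilen (J i)) = \<beta> - \<alpha>"
    unfolding sumJ lenI by simp
  have intI: "is_interval I" unfolding I_def S_def by (rule is_interval_oc)
  have intJ: "\<forall>i\<in>{1..k}. is_interval (J i)" unfolding J_def using is_interval_oc by blast
  show ?thesis
    using intI intJ cov' Isub Jsub sumall big by blast
qed

end
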